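(* Let $q=r^2$ with $r$ an odd prime power, $\theta$ a primitive element of $\mathbb{F}_q$, and $q-1=e_1f_1=e_2f_2$ with positive integers, where for some integer $l\geq 2$ we have $e_1\equiv 2^l\pmod{2^{l+1}}$ and $2^l\mid e_2$, and moreover $2e_2\mid e_1(r+1)$ and $e_1\mid e_2(r-1)$. Let $A=\langle\theta^{e_1}\rangle$, $B=\langle\theta^{e_2}\rangle$, $\beta=\theta^{e_2}$, $\gamma=\theta^{e_1/2}$, $D_1=\frac{e_1}{\gcd(e_1,e_2)}$, $D_2=\frac{e_2}{\gcd(e_1,e_2)}$. Let $1\leq s\leq D_1$, $1\leq t\leq D_2$, let $i_1,\dots,i_s$ be integers pairwise distinct modulo $D_1$ and $j_1,\dots,j_t$ integers pairwise distinct modulo $D_2$, and set $M=\bigcup_{\mu=1}^s\beta^{i_\mu}A$, $N=\bigcup_{\nu=1}^t\gamma^{2j_\nu+1}B$, $S=M\cup N$. Then $\eta(L_S(b))=(-1)^{\frac{te_1(r+1)}{2e_2}+\frac{t(r+1)}{2}}$ for every $b\in M$, and $\eta(L_S(b))=(-1)^{\frac{(t-1)(r+1)}{2}}$ for every $b\in N$.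
   Context: $\eta$ denotes the quadratic character of $\mathbb{F}_q^*$ ($\eta(x)=1$ if $x$ is a nonzero square, $-1$ otherwise). For a finite set $S\subseteq\mathbb{F}_q$ and $b\in S$, $L_S(b)=\prod_{c\in S,\,c\neq b}(b-c)$. $\langle x\rangle$ denotes the cyclic subgroup of $\mathbb{F}_q^*$ generated by $x$. *)

theory Defs
  imports "HOL-Number_Theory.Number_Theory"
begin

definition eta :: "'a::{finite,field} \<Rightarrow> int" where
  "eta x = (if x = 0 then 0 else if (\<exists>y. y ^ 2 = x) then 1 else -1)"

definition L :: "'a::field set \<Rightarrow> 'a \<Rightarrow> 'a" where
  "L S b = (\<Prod>c\<in>S - {b}. b - c)"

definition cyc :: "'a::field \<Rightarrow> 'a set" where
  "cyc x = {x powi k | k. True}"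

definition primitive_elem :: "'a::{finite,field} \<Rightarrow> bool" where
  "primitive_elem \<theta> \<longleftrightarrow> \<theta> \<noteq> 0 \<and> cyc \<theta> = UNIV - {0}"

end

theory Submission imports Defs "HOL-Computational_Algebra.Polynomial"
begin

lemma poly_roots_unity:
  fixes H :: "'a::field set"
  assumes fin: "finite H" and cH: "card H = f" and f1: "f \<ge> 1" and rt: "\<forall>x\<in>H. x ^ f = 1"
  shows "(\<Prod>x\<in>H. [:-x, 1:]) = monom 1 f - 1"
proof (rule ccontr)
  define P where "P = (\<Prod>x\<in>H. [:-x, 1:])"
  define D where "D = monom 1 f - 1 - P"
  assume "P \<noteq> monom 1 f - 1"
  hence D0: "D \<noteq> 0" unfolding D_def P_def[symmetric] by simp
  have degP: "degree P = f" unfolding P_def using cH by (subst degree_prod_sum_eq) auto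
  have lcP: "coeff P f = 1" using lead_coeff_prod[of "\<lambda>x. [:-x, 1:]" H] degP unfolding P_def by simp
  have "\<forall>i>f - 1. coeff D i = 0"
  proof (intro allI impI)
    fix i assume "i > f - 1"
    hence "i = f \<or> i > f" using f1 by auto
    thus "coeff D i = 0"
    proof
      assume "i = f" thus ?thesis unfolding D_def using lcP f1 by simp
    next
      assume "i > f" thus ?thesis unfolding D_def using degP coeff_eq_0[of P i] by simp
    qed
  qed
  hence degD: "degree D \<le> f - 1" by (rule degree_le)
  have "H \<subseteq> {x. poly D x = 0}"
  proof
    fix x assume xH: "x \<in> H"
    have "poly P x = 0" unfolding P_def poly_prod using xH fin by (auto intro: prod_zero)
    thus "x \<in> {x. poly D x = 0}" using rt xH unfolding D_def by (simp add: poly_monom)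
  qed
  hence "card H \<le> card {x. poly D x = 0}"
    using poly_roots_finite[OF D0] by (intro card_mono) auto
  also have "\<dots> \<le> degree D" by (rule card_poly_roots_bound[OF D0])
  finally show False using degD cH f1 by simp
qed

lemma poly_roots_unity_own:
  fixes H :: "'a::field set"
  assumes fin: "finite H" and cH: "card H = f" and f1: "f \<ge> 1" and rt: "\<forall>x\<in>H. x ^ f = 1"
    and oneH: "1 \<in> H"
  shows "(\<Prod>x\<in>H - {1}. (1 - x)) = of_nat f"
proof -
  have "(\<Prod>x\<in>H. [:-x, 1:]) = [:-1, 1:] * (\<Prod>x\<in>H - {1}. [:-x, 1:])"
    using oneH fin by (simp add: prod.remove)
  moreover have "monom 1 f - 1 = ([:0, 1:] - 1) * (\<Sum>i<f. [:0, 1:] ^ i :: 'a poly)"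
    by (simp add: monom_altdef power_diff_1_eq)
  moreover have "[:0, 1:] - 1 = ([:-1, 1:] :: 'a poly)" by (simp add: one_pCons)
  ultimately have "[:-1, 1:] * (\<Prod>x\<in>H - {1}. [:-x, 1:]) = [:-1, 1:] * (\<Sum>i<f. [:0, 1:] ^ i :: 'a poly)"
    using poly_roots_unity[OF assms(1-4)] by simp
  moreover have ne: "[:-1, 1:] \<noteq> (0::'a poly)" by simp
  ultimately have "(\<Prod>x\<in>H - {1}. [:-x, 1:]) = (\<Sum>i<f. [:0, 1:] ^ i :: 'a poly)"
    using mult_left_cancel[OF ne] by blast
  hence "poly (\<Prod>x\<in>H - {1}. [:-x, 1:]) 1 = poly (\<Sum>i<f. [:0, 1:] ^ i :: 'a poly) 1" by simp
  thus ?thesis by (simp add: poly_prod poly_sum)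
qed

locale ffc =
  fixes th :: "'a::{finite,field}" and r :: nat
  assumes prim: "primitive_elem th"
    and qd: "card (UNIV :: 'a set) = r ^ 2"
    and rodd: "odd r"
    and rpp: "\<exists>p k. prime p \<and> 0 < k \<and> r = p ^ k"
begin

definition Q :: nat where "Q = card (UNIV :: 'a set) - 1"
definition E :: "int \<Rightarrow> 'a" where "E z = th powi z"

lemma th_nz: "th \<noteq> 0" using prim unfolding primitive_elem_def by auto

lemma E_nz[simp]: "E z \<noteq> 0" unfolding E_def using th_nz by simp

lemma E_add: "E (a + b) = E a * E b" unfolding E_def using th_nz by (simp add: power_int_add)

lemma E_pow: "E z ^ n = E (z * int n)" unfolding E_def by (simp add: power_int_power')

lemma E_0[simp]: "E 0 = 1" unfolding E_def by simp

lemma E_nat: "E (int n) = th ^ n" unfolding E_def by simp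

lemma card_ge2: "card (UNIV :: 'a set) \<ge> 2"
proof -
  have "{0::'a,1} \<subseteq> UNIV" by auto
  hence "card {0::'a,1} \<le> card (UNIV::'a set)" by (intro card_mono) auto
  thus ?thesis by simp
qed

lemma r_ge3: "r \<ge> 3"
proof -
  have "r^2 \<ge> 2" using card_ge2 qd by simp
  hence "r \<ge> 2" by (cases r; cases "r - 1") (auto simp: power2_eq_square)
  thus ?thesis using rodd by presburger
qed

lemma Q_eq: "Q = (r - 1) * (r + 1)"
  unfolding Q_def qd using r_ge3 by (simp add: power2_eq_square algebra_simps)

lemma Q_pos: "Q > 0" using Q_eq r_ge3 by simp

lemma Q_even: "even Q" using Q_eq rodd r_ge3 by simp

lemma surjE: "x \<noteq> 0 \<Longrightarrow> \<exists>z. x = E z"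
  using prim unfolding primitive_elem_def cyc_def E_def by auto

lemma fermat: "th ^ Q = 1"
proof -
  let ?U = "UNIV - {0::'a}"
  have "(\<Prod>y\<in>?U. th * y) = (\<Prod>y\<in>?U. y)"
    by (rule prod.reindex_bij_witness[of _ "\<lambda>y. y / th" "\<lambda>y. th * y"]) (use th_nz in auto)
  moreover have "(\<Prod>y\<in>?U. th * y) = th ^ card ?U * (\<Prod>y\<in>?U. y)"
    by (simp add: prod.distrib)
  moreover have "card ?U = Q" unfolding Q_def by (simp add: card_Diff_singleton)
  moreover have "(\<Prod>y\<in>?U. y) \<noteq> 0" by (simp add: prod_zero_iff)
  ultimately show ?thesis by simp
qed

lemma E_Q: "E (int Q * k) = 1"
  unfolding E_def by (simp add: power_int_mult fermat)

lemma E_mod: "E z = E (z mod int Q)"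
proof -
  have "z = int Q * (z div int Q) + z mod int Q" by simp
  hence "E z = E (int Q * (z div int Q)) * E (z mod int Q)" by (metis E_add)
  thus ?thesis using E_Q by simp
qed

lemma E_one_iff: "E z = 1 \<longleftrightarrow> int Q dvd z"
proof
  assume "int Q dvd z" thus "E z = 1" using E_Q by auto
next
  assume h: "E z = 1"
  define m where "m = z mod int Q"
  have m0: "0 \<le> m" "m < int Q" unfolding m_def using Q_pos by auto
  have Em: "E m = 1" using h E_mod m_def by simp
  show "int Q dvd z"
  proof (rule ccontr)
    assume "\<not> int Q dvd z"
    hence mp: "m > 0" using m0 unfolding m_def by (simp add: dvd_eq_mod_eq_0)
    have per: "E k = E (k mod m)" for k
    proof -
      have "k = m * (k div m) + k mod m" by simp
      hence "E k = E m ^ nat (k div m) * E (k mod m)" if "k div m \<ge> 0"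
        using that by (metis E_add E_pow int_nat_eq mult.commute)
      have "E (m * (k div m)) = 1"
      proof (cases "k div m \<ge> 0")
        case True thus ?thesis using Em E_pow[of m "nat (k div m)"] by simp
      next
        case False
        have "E (m * (k div m)) * E (m * nat (- (k div m))) = 1"
          using False by (simp flip: E_add)
        moreover have "E (m * nat (- (k div m))) = 1" using Em E_pow[of m "nat (- (k div m))"] by simp
        ultimately show ?thesis by simp
      qed
      moreover have "E k = E (m * (k div m)) * E (k mod m)"
        by (metis E_add div_mult_mod_eq mult.commute)
      ultimately show ?thesis by simp
    qed
    have "UNIV - {0} \<subseteq> (\<lambda>n. E (int n)) ` {..<nat m}"
    proof
      fix x :: 'a assume "x \<in> UNIV - {0}"
      then obtain k where "x = E k" using surjE by auto
      hence "x = E (int (nat (k mod m)))" using per mp by simp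
      moreover have "nat (k mod m) \<in> {..<nat m}" using mp by simp
      ultimately show "x \<in> (\<lambda>n. E (int n)) ` {..<nat m}" by (rule rev_image_eqI[rotated])
    qed
    hence "card (UNIV - {0::'a}) \<le> card ((\<lambda>n. E (int n)) ` {..<nat m})" by (intro card_mono) auto
    also have "\<dots> \<le> nat m" using card_image_le[of "{..<nat m}"] by simp
    finally have "Q \<le> nat m" unfolding Q_def by (simp add: card_Diff_singleton)
    thus False using m0 by simp
  qed
qed

lemma E_eq_iff: "E a = E b \<longleftrightarrow> int Q dvd (a - b)"
proof -
  have "E a = E (a - b) * E b" by (metis E_add diff_add_cancel)
  thus ?thesis using E_one_iff[of "a-b"] by auto
qed


definition h :: nat where "h = Q div 2"

lemma h_eq: "h = (r - 1) * ((r + 1) div 2)"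
  unfolding h_def Q_eq using rodd by (auto elim!: oddE simp: algebra_simps)

lemma Q_2h: "Q = 2 * h" unfolding h_def using Q_even by simp

lemma E_h: "E (int h) = -1"
proof -
  have sq: "E (int h) * E (int h) = 1" using E_Q[of 1] Q_2h by (simp flip: E_add)
  have ne: "E (int h) \<noteq> 1"
  proof
    assume "E (int h) = 1"
    hence "int Q dvd int h" using E_one_iff by blast
    hence "Q dvd h" by simp
    moreover have "0 < h" "h < Q" using Q_2h Q_pos by auto
    ultimately show False using nat_dvd_not_less by blast
  qed
  have "(E (int h) - 1) * (E (int h) + 1) = 0" using sq by (simp add: algebra_simps)
  thus ?thesis using ne by (simp add: eq_neg_iff_add_eq_0)
qed

lemma neg1_ne1: "(-1::'a) \<noteq> 1"
proof
  assume "(-1::'a) = 1"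
  hence "E (int h) = 1" using E_h by simp
  hence "int Q dvd int h" using E_one_iff by blast
  hence "Q dvd h" by simp
  moreover have "0 < h" "h < Q" using Q_2h Q_pos by auto
  ultimately show False using nat_dvd_not_less by blast
qed

lemma E_even_pow: "even z \<Longrightarrow> E z ^ h = 1"
proof -
  assume "even z" then obtain w where "z = 2 * w" by auto
  hence "z * int h = int Q * w" using Q_2h by simp
  thus ?thesis by (simp add: E_pow E_Q)
qed

lemma eta_euler: fixes x :: 'a assumes "x \<noteq> 0" shows "of_int (eta x) = x ^ h"
proof -
  obtain z where xz: "x = E z" using surjE assms by auto
  show ?thesis
  proof (cases "even z")
    case True
    then obtain w where "z = 2 * w" by auto
    hence "x = E w ^ 2" using xz by (simp add: E_pow mult.commute)
    hence "eta x = 1" unfolding eta_def using assms by auto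
    thus ?thesis using E_even_pow True xz by simp
  next
    case False
    have ns: "\<not> (\<exists>y. y ^ 2 = x)"
    proof
      assume "\<exists>y. y ^ 2 = x"
      then obtain y where y: "y ^ 2 = x" by auto
      hence "y \<noteq> 0" using assms by auto
      then obtain w where "y = E w" using surjE by auto
      hence "E (w * 2) = E z" using y xz by (simp add: E_pow)
      hence "int Q dvd (w * 2 - z)" using E_eq_iff by blast
      moreover have "even (int Q)" using Q_even by simp
      ultimately have "even (w * 2 - z)" using dvd_trans by blast
      thus False using False by simp
    qed
    hence "eta x = -1" unfolding eta_def using assms by auto
    moreover have "x ^ h = E (int h)"
    proof -
      obtain w where "z - 1 = 2 * w" using False by (metis odd_two_times_div_two_succ add_diff_cancel_right')
      hence "z * int h - int h = int Q * w" using Q_2h by (simp add: algebra_simps)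
      hence "E (z * int h) = E (int h)" using E_eq_iff by simp
      thus ?thesis using xz by (simp add: E_pow)
    qed
    ultimately show ?thesis using E_h by simp
  qed
qed

lemma eta_vals: "(x::'a) \<noteq> 0 \<Longrightarrow> eta x = 1 \<or> eta x = -1" unfolding eta_def by auto

lemma eta_from_pow:
  fixes x :: 'a
  assumes "x \<noteq> 0" "x ^ h = (-1) ^ n"
  shows "eta x = (-1) ^ n"
proof -
  have "of_int (eta x) = (of_int ((-1) ^ n) :: 'a)" using eta_euler[OF assms(1)] assms(2) by simp
  moreover have "eta x = 1 \<or> eta x = -1" using eta_vals assms by auto
  moreover have "(-1::int) ^ n = 1 \<or> (-1::int) ^ n = -1" by (cases "even n") auto
  ultimately show ?thesis using neg1_ne1
    by (smt (verit, best) of_int_1 of_int_minus)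
qed

lemma char_prime: "prime CHAR('a)"
proof -
  have "CHAR('a) > 0" by (rule finite_imp_CHAR_pos) simp
  thus ?thesis by (rule prime_CHAR_semidom)
qed

lemma r_char: "\<exists>k. r = CHAR('a) ^ k"
proof -
  obtain p k where pk: "prime p" "0 < k" "r = p ^ k" using rpp by auto
  have "CHAR('a) dvd card (UNIV::'a set)" by (rule CHAR_dvd_CARD)
  hence "CHAR('a) dvd p ^ (2 * k)" using qd pk by (simp add: power_mult mult.commute)
  hence "CHAR('a) dvd p" using char_prime prime_dvd_power by blast
  hence "CHAR('a) = p" using char_prime pk(1) using primes_dvd_imp_eq by blast
  thus ?thesis using pk by auto
qed

lemma frob_add: "(x + y :: 'a) ^ r = x ^ r + y ^ r"
  using r_char freshmans_dream'[OF char_prime] by blast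

lemma frob: "(x - y :: 'a) ^ r = x ^ r - y ^ r"
proof -
  have "(x + (-y)) ^ r = x ^ r + (-y) ^ r" by (rule frob_add)
  thus ?thesis using rodd by (simp add: power_minus_odd)
qed

lemma ofnat_r: "(of_nat n :: 'a) ^ r = of_nat n"
proof (induction n)
  case 0 thus ?case using r_ge3 by simp
next
  case (Suc n) thus ?case by (simp only: of_nat_Suc frob_add power_one)
qed

lemma G1: fixes x :: 'a assumes "x \<noteq> 0" "x ^ r = x" shows "x ^ h = 1"
proof -
  obtain m where rm: "r = Suc m" using r_ge3 by (cases r) auto
  have "x ^ (r - 1) * x = x * 1" using assms(2) unfolding rm by (simp add: power_Suc2)
  hence "x ^ (r - 1) = 1" using assms(1) by simp
  thus ?thesis unfolding h_eq by (simp add: power_mult)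
qed

lemma G2: fixes w :: 'a assumes "w ^ (r + 1) = 1" "w \<noteq> 1"
  shows "(w - 1) ^ h * w ^ ((r + 1) div 2) = (-1) ^ ((r + 1) div 2)"
proof -
  have "(w - 1) ^ r = w ^ r - 1" using frob[of w 1] by simp
  hence "(w - 1) ^ r * w = w ^ r * w - w" by (simp add: left_diff_distrib)
  also have "w ^ r * w = 1" using assms(1) by (simp add: mult.commute)
  finally have a: "(w - 1) ^ r * w = -(w - 1)" by simp
  obtain m where rm: "r = Suc m" using r_ge3 by (cases r) auto
  have c: "(w - 1) ^ r = (w - 1) ^ (r - 1) * (w - 1)" unfolding rm by (simp add: power_Suc2)
  have "((w - 1) ^ (r - 1) * w) * (w - 1) = (w - 1) ^ r * w" unfolding c by (simp add: mult_ac)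
  also have "\<dots> = (-1) * (w - 1)" using a by simp
  finally have "((w - 1) ^ (r - 1) * w) * (w - 1) = (-1) * (w - 1)" .
  moreover have ne: "w - 1 \<noteq> 0" using assms(2) by simp
  ultimately have b: "(w - 1) ^ (r - 1) * w = -1" using mult_right_cancel[OF ne] by blast
  have "((w - 1) ^ (r - 1) * w) ^ ((r + 1) div 2) = (-1) ^ ((r + 1) div 2)" using b by simp
  thus ?thesis unfolding h_eq by (simp add: power_mult power_mult_distrib)
qed


lemma cyc_E: "cyc (th ^ e) = {E (int e * k) | k. True}"
  unfolding cyc_def E_def by (simp add: power_int_power)

lemma cyc_img:
  assumes "e > 0" "e dvd Q"
  shows "cyc (th ^ e) = (\<lambda>m. E (int e * int m)) ` {..<Q div e}"
proof -
  define f where "f = Q div e"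
  have Qef: "Q = e * f" using assms unfolding f_def by simp
  have fpos: "f > 0" using Qef Q_pos by auto
  have "E (int e * k) = E (int e * int (nat (k mod int f)))" for k
  proof -
    have "k - k mod int f = int f * (k div int f)" by (simp add: minus_mod_eq_mult_div)
    hence "int e * k - int e * (k mod int f) = int e * (int f * (k div int f))"
      by (metis right_diff_distrib)
    hence "int e * k - int e * (k mod int f) = int Q * (k div int f)" using Qef by simp
    thus ?thesis using fpos by (simp add: E_eq_iff)
  qed
  hence "E (int e * k) \<in> (\<lambda>m. E (int e * int m)) ` {..<f}" for k
    using fpos by (intro rev_image_eqI[of "nat (k mod int f)"]) (auto simp: nat_less_iff)
  thus ?thesis unfolding cyc_E f_def[symmetric] by auto
qed

lemma cyc_card:
  assumes "e > 0" "e dvd Q"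
  shows "card (cyc (th ^ e)) = Q div e"
proof -
  define f where "f = Q div e"
  have Qef: "Q = e * f" using assms unfolding f_def by simp
  have "inj_on (\<lambda>m. E (int e * int m)) {..<f}"
  proof
    fix m m' assume mm: "m \<in> {..<f}" "m' \<in> {..<f}" "E (int e * int m) = E (int e * int m')"
    hence "int e * int f dvd int e * (int m - int m')" using Qef E_eq_iff by (simp add: algebra_simps)
    hence "int f dvd int m - int m'" using assms by simp
    hence d: "int f dvd \<bar>int m - int m'\<bar>" by simp
    have l: "\<bar>int m - int m'\<bar> < int f" using mm by auto
    show "m = m'"
    proof (rule ccontr)
      assume "m \<noteq> m'"
      hence "0 < \<bar>int m - int m'\<bar>" by simp
      thus False using zdvd_not_zless[OF _ l] d by blast
    qed
  qed
  thus ?thesis using cyc_img[OF assms] unfolding f_def by (simp add: card_image)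
qed


lemma cyc_pow:
  assumes "e > 0" "e dvd Q" "x \<in> cyc (th ^ e)"
  shows "x ^ (Q div e) = 1"
proof -
  obtain k where xk: "x = E (int e * k)" using assms(3) unfolding cyc_E by auto
  have h1: "int e * int (Q div e) = int Q" using assms(1,2) by (simp flip: of_nat_mult)
  have h2: "int e * k * int (Q div e) = int Q * k" using h1 by (metis mult.commute mult.left_commute)
  have "x ^ (Q div e) = E (int Q * k)" unfolding xk E_pow h2 ..
  thus ?thesis by (simp add: E_Q)
qed

lemma one_in_cyc: "1 \<in> cyc (th ^ e)"
  unfolding cyc_E by (auto intro: exI[of _ 0])

lemma cyc_mul:
  assumes "x0 \<in> cyc (th ^ e)"
  shows "(\<lambda>x. x0 * x) ` cyc (th ^ e) = cyc (th ^ e)"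
proof -
  obtain k0 where k0: "x0 = E (int e * k0)" using assms unfolding cyc_E by auto
  show ?thesis
  proof
    show "(\<lambda>x. x0 * x) ` cyc (th ^ e) \<subseteq> cyc (th ^ e)"
      unfolding cyc_E k0 by (auto simp flip: E_add simp: distrib_left[symmetric])
  next
    show "cyc (th ^ e) \<subseteq> (\<lambda>x. x0 * x) ` cyc (th ^ e)"
    proof
      fix y assume "y \<in> cyc (th ^ e)"
      then obtain k where y: "y = E (int e * k)" unfolding cyc_E by auto
      have "y = x0 * E (int e * (k - k0))" unfolding y k0
        by (simp flip: E_add add: algebra_simps)
      moreover have "E (int e * (k - k0)) \<in> cyc (th ^ e)" unfolding cyc_E by auto
      ultimately show "y \<in> (\<lambda>x. x0 * x) ` cyc (th ^ e)" by auto
    qed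
  qed
qed

lemma coset_prod:
  assumes e: "e > 0" "e dvd Q" and a: "a \<noteq> 0"
  shows "(\<Prod>c\<in>(\<lambda>x. a * x) ` cyc (th ^ e). (y - c)) = y ^ (Q div e) - a ^ (Q div e)"
proof -
  let ?H = "cyc (th ^ e)"
  have fin: "finite ?H" by simp
  have f1: "Q div e \<ge> 1" using e Q_pos by (metis dvd_div_eq_0_iff less_one not_less not_gr0)
  have "(\<Prod>c\<in>(\<lambda>x. a * x) ` ?H. (y - c)) = (\<Prod>x\<in>?H. (y - a * x))"
    using a by (subst prod.reindex) (auto simp: inj_on_def)
  also have "\<dots> = (\<Prod>x\<in>?H. a * (y / a - x))" using a by (simp add: algebra_simps)
  also have "\<dots> = a ^ card ?H * (\<Prod>x\<in>?H. (y / a - x))" by (simp add: prod.distrib)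
  also have "(\<Prod>x\<in>?H. (y / a - x)) = poly (\<Prod>x\<in>?H. [:-x, 1:]) (y / a)" by (simp add: poly_prod)
  also have "(\<Prod>x\<in>?H. [:-x, 1:]) = monom 1 (Q div e) - 1"
    using poly_roots_unity[OF fin cyc_card[OF e] f1] cyc_pow[OF e] by blast
  finally show ?thesis using a cyc_card[OF e] by (simp add: poly_monom power_divide algebra_simps)
qed

lemma coset_own:
  assumes e: "e > 0" "e dvd Q" and a: "a \<noteq> 0" and b: "b \<in> (\<lambda>x. a * x) ` cyc (th ^ e)"
  shows "(\<Prod>c\<in>(\<lambda>x. a * x) ` cyc (th ^ e) - {b}. (b - c)) = b ^ (Q div e - 1) * of_nat (Q div e)"
proof -
  let ?H = "cyc (th ^ e)"
  have fin: "finite ?H" by simp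
  have f1: "Q div e \<ge> 1" using e Q_pos by (metis dvd_div_eq_0_iff less_one not_less not_gr0)
  obtain x0 where x0: "x0 \<in> ?H" "b = a * x0" using b by auto
  have b0: "b \<noteq> 0" using x0 a cyc_E by auto
  have "(\<lambda>x. a * x) ` ?H = (\<lambda>x. a * x) ` ((\<lambda>x. x0 * x) ` ?H)" using cyc_mul[OF x0(1)] by simp
  also have "\<dots> = (\<lambda>x. b * x) ` ?H" unfolding x0(2) image_image by (simp add: mult.assoc)
  finally have eqS: "(\<lambda>x. a * x) ` ?H - {b} = (\<lambda>x. b * x) ` (?H - {1})" using b0 by auto
  have "(\<Prod>c\<in>(\<lambda>x. a * x) ` ?H - {b}. (b - c)) = (\<Prod>x\<in>?H - {1}. (b - b * x))"
    unfolding eqS using b0 by (subst prod.reindex) (auto simp: inj_on_def)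
  also have "\<dots> = (\<Prod>x\<in>?H - {1}. b * (1 - x))" by (simp add: algebra_simps)
  also have "\<dots> = b ^ card (?H - {1}) * (\<Prod>x\<in>?H - {1}. (1 - x))" by (simp add: prod.distrib)
  also have "(\<Prod>x\<in>?H - {1}. (1 - x)) = of_nat (Q div e)"
    using poly_roots_unity_own[OF fin cyc_card[OF e] f1 _ one_in_cyc] cyc_pow[OF e] by blast
  also have "card (?H - {1}) = Q div e - 1" using cyc_card[OF e] one_in_cyc by (simp add: card_Diff_singleton)
  finally show ?thesis .
qed

end



context ffc begin
lemma E_hm: "E (int h * m) = (if even m then 1 else -1)"
proof (cases "even m")
  case True
  then obtain w where "m = 2 * w" by auto
  hence "int h * m = int Q * w" using Q_2h by simp
  thus ?thesis using True E_Q by simp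
next
  case False
  then obtain w where "m = 2 * w + 1" by (metis oddE)
  hence "int h * m - int h = int Q * w" using Q_2h by (simp add: algebra_simps)
  hence "E (int h * m) = E (int h)" using E_eq_iff by simp
  thus ?thesis using False E_h by simp
qed
end

lemma alg_Mb: assumes "(Q::int) = e1*f1" "e1*c0 = e2*r1" shows "(e2*i + e1*k)*f1*r1 = Q*(i*c0 + k*r1)"
proof -
  have "(e2*i + e1*k)*f1*r1 = i*f1*(e2*r1) + k*r1*(e1*f1)" by (simp add: algebra_simps)
  also have "\<dots> = i*f1*(e1*c0) + k*r1*Q" using assms by simp
  also have "\<dots> = Q*(i*c0 + k*r1)" using assms by (simp add: algebra_simps)
  finally show ?thesis .
qed
lemma alg_Mc: assumes "(Q::int) = e2*f2" "e2*d = e1*R2" shows "(e2*i + e1*k)*f2*(2*R2) = Q*(i*2*R2 + 2*k*d)"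
proof -
  have "(e2*i + e1*k)*f2*(2*R2) = 2*i*R2*(e2*f2) + 2*k*f2*(e1*R2)" by (simp add: algebra_simps)
  also have "\<dots> = 2*i*R2*(e2*f2) + 2*k*f2*(e2*d)" using assms by simp
  also have "\<dots> = Q*(i*2*R2 + 2*k*d)" using assms by (simp add: algebra_simps)
  finally show ?thesis .
qed
lemma alg_Md: assumes "(Q::int) = e2*f2" "e2*d = e1*R2" shows "(e2*i + e1*k)*f2*R2 = Q*(i*R2 + k*d)"
proof -
  have "(e2*i + e1*k)*f2*R2 = i*R2*(e2*f2) + k*f2*(e1*R2)" by (simp add: algebra_simps)
  also have "\<dots> = i*R2*(e2*f2) + k*f2*(e2*d)" using assms by simp
  also have "\<dots> = Q*(i*R2 + k*d)" using assms by (simp add: algebra_simps)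
  finally show ?thesis .
qed
lemma alg_Nb: assumes "(Q::int) = e1*f1" "e1 = 2*e1h" "r1 = 2*R1" "e1*c0 = e2*r1"
  shows "(e1h*(2*j+1) + e2*k)*f1*r1 = Q*((2*j+1)*R1 + k*c0)"
proof -
  have "(e1h*(2*j+1) + e2*k)*f1*r1 = (2*j+1)*R1*f1*(2*e1h) + k*f1*(e2*r1)" using assms(3) by (simp add: algebra_simps)
  also have "\<dots> = (2*j+1)*R1*(e1*f1) + k*f1*(e1*c0)" using assms(2,4) by (simp add: algebra_simps)
  also have "\<dots> = Q*((2*j+1)*R1 + k*c0)" using assms(1) by (simp add: algebra_simps)
  finally show ?thesis .
qed
lemma alg_Nc: assumes "(Q::int) = e2*f2" "e2*d = 2*e1h*R2"
  shows "(e1h*(2*j+1) + e2*k)*f2*(2*R2) = Q*((2*j+1)*d + 2*k*R2)"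
proof -
  have "(e1h*(2*j+1) + e2*k)*f2*(2*R2) = (2*j+1)*f2*(2*e1h*R2) + 2*k*R2*(e2*f2)" by (simp add: algebra_simps)
  also have "\<dots> = (2*j+1)*f2*(e2*d) + 2*k*R2*(e2*f2)" using assms(2) by simp
  also have "\<dots> = Q*((2*j+1)*d + 2*k*R2)" using assms(1) by (simp add: algebra_simps)
  finally show ?thesis .
qed
lemma alg_Nd: assumes "(Q::int) = 2*h" "Q = e2*f2" "e2*d = 2*e1h*R2"
  shows "(e1h*(2*j+1) + e2*k)*f2*R2 = h*((2*j+1)*d) + Q*(k*R2)"
proof -
  have "2*((e1h*(2*j+1) + e2*k)*f2*R2) = (2*j+1)*f2*(2*e1h*R2) + 2*k*R2*(e2*f2)" by (simp add: algebra_simps)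
  also have "\<dots> = (2*j+1)*f2*(e2*d) + 2*k*R2*(e2*f2)" using assms(3) by simp
  also have "\<dots> = 2*(h*((2*j+1)*d) + Q*(k*R2))" using assms(1,2) by (simp add: algebra_simps)
  finally show ?thesis by simp
qed

lemma gdiv:
  fixes a b :: nat and x :: int
  assumes "a > 0" "int a dvd int b * x"
  shows "int (a div gcd a b) dvd x"
proof -
  define g where "g = gcd a b"
  have gp: "g > 0" unfolding g_def using assms(1) by simp
  have ea: "a = g * (a div g)" and eb: "b = g * (b div g)" unfolding g_def by simp_all
  have cop: "coprime (a div g) (b div g)" unfolding g_def using div_gcd_coprime assms(1) by blast
  have "int g * int (a div g) dvd int g * (int (b div g) * x)"
    using assms(2) ea eb by (metis of_nat_mult mult.assoc)
  hence "int (a div g) dvd int (b div g) * x" using gp by simp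
  moreover have "coprime (int (a div g)) (int (b div g))" using cop by simp
  ultimately show ?thesis unfolding g_def using coprime_dvd_mult_right_iff by blast
qed

locale mc = ffc th r for th :: "'a::{finite,field}" and r +
  fixes e1 f1 e2 f2 l s t :: nat and i j :: "nat \<Rightarrow> int"
  assumes pos: "0 < e1" "0 < f1" "0 < e2" "0 < f2"
    and fact1: "card (UNIV :: 'a set) - 1 = e1 * f1"
    and fact2: "card (UNIV :: 'a set) - 1 = e2 * f2"
    and l_ge: "2 \<le> l"
    and e1_cong: "[e1 = 2 ^ l] (mod 2 ^ (l + 1))"
    and e2_div: "2 ^ l dvd e2"
    and div1: "2 * e2 dvd e1 * (r + 1)"
    and div2: "e1 dvd e2 * (r - 1)"
    and i_dist: "\<forall>\<mu>\<in>{1..s}. \<forall>\<mu>'\<in>{1..s}. \<mu> \<noteq> \<mu>' \<longrightarrow>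
                   \<not> [i \<mu> = i \<mu>'] (mod int (e1 div gcd e1 e2))"
    and j_dist: "\<forall>\<nu>\<in>{1..t}. \<forall>\<nu>'\<in>{1..t}. \<nu> \<noteq> \<nu>' \<longrightarrow>
                   \<not> [j \<nu> = j \<nu>'] (mod int (e2 div gcd e1 e2))"
begin

definition d :: nat where "d = e1 * (r + 1) div (2 * e2)"
definition c0 :: nat where "c0 = e2 * (r - 1) div e1"
definition R2 :: nat where "R2 = (r + 1) div 2"
definition R1 :: nat where "R1 = (r - 1) div 2"
definition e1h :: nat where "e1h = e1 div 2"

lemma Qe1: "Q = e1 * f1" using fact1 unfolding Q_def .
lemma Qe2: "Q = e2 * f2" using fact2 unfolding Q_def .
lemma f1_eq: "f1 = Q div e1" using Qe1 pos by simp
lemma f2_eq: "f2 = Q div e2" using Qe2 pos by simp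
lemma e1_dvdQ: "e1 dvd Q" using Qe1 by simp
lemma e2_dvdQ: "e2 dvd Q" using Qe2 by simp

lemma d_eq: "2 * e2 * d = e1 * (r + 1)" unfolding d_def using div1 by simp
lemma c0_eq: "e1 * c0 = e2 * (r - 1)" unfolding c0_def using div2 by simp
lemma R2_eq: "r + 1 = 2 * R2" unfolding R2_def using rodd by simp
lemma R1_eq: "r - 1 = 2 * R1"
proof -
  obtain m where "r = 2 * m + 1" using rodd oddE by blast
  thus ?thesis unfolding R1_def by simp
qed

lemma pow_l_dvd_e1: "2 ^ l dvd e1"
proof -
  have "(2::nat) ^ l dvd 2 ^ (l + 1)" by (rule le_imp_power_dvd) simp
  hence c: "[e1 = 2 ^ l] (mod 2 ^ l)" by (rule cong_dvd_modulus_nat[OF e1_cong])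
  show ?thesis using cong_dvd_iff[OF c] by simp
qed

lemma not_pow_l1_dvd_e1: "\<not> 2 ^ (l + 1) dvd e1"
proof
  assume "2 ^ (l + 1) dvd e1"
  hence "2 ^ (l + 1) dvd (2::nat) ^ l" using cong_dvd_iff[OF e1_cong] by blast
  hence "(2::nat) ^ (l + 1) \<le> 2 ^ l" by (rule dvd_imp_le) simp
  thus False by simp
qed

lemma four_dvd_e1: "4 dvd e1"
proof -
  have "(2::nat) ^ 2 dvd 2 ^ l" using l_ge by (rule le_imp_power_dvd)
  hence "(4::nat) dvd 2 ^ l" by simp
  thus ?thesis using pow_l_dvd_e1 dvd_trans by blast
qed

lemma four_dvd_e2: "4 dvd e2"
proof -
  have "(2::nat) ^ 2 dvd 2 ^ l" using l_ge by (rule le_imp_power_dvd)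
  hence "(4::nat) dvd 2 ^ l" by simp
  thus ?thesis using e2_div dvd_trans by blast
qed

lemma e1h_eq: "e1 = 2 * e1h"
proof -
  obtain k where "e1 = 4 * k" using four_dvd_e1 by (auto elim!: dvdE)
  thus ?thesis unfolding e1h_def by simp
qed
lemma e1h_even: "even e1h"
proof -
  obtain k where "e1 = 4 * k" using four_dvd_e1 by (auto elim!: dvdE)
  hence "e1h = 2 * k" unfolding e1h_def by simp
  thus ?thesis by simp
qed
lemma e1h_not: "\<not> 2 ^ l dvd e1h"
proof
  assume "2 ^ l dvd e1h"
  then obtain k where "e1h = 2 ^ l * k" by (auto elim!: dvdE)
  hence "e1 = 2 ^ (l + 1) * k" using e1h_eq by simp
  thus False using not_pow_l1_dvd_e1 by simp
qed


lemma iQ1: "int Q = int e1 * int f1" using Qe1 by simp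
lemma iQ2: "int Q = int e2 * int f2" using Qe2 by simp
lemma ic0: "int e1 * int c0 = int e2 * int (r - 1)" using c0_eq by (simp flip: of_nat_mult)
lemma nd: "e2 * d = e1 * R2"
proof -
  have "2 * e2 * d = e1 * (2 * R2)" using d_eq unfolding R2_eq .
  thus ?thesis by simp
qed
lemma id: "int e2 * int d = int e1 * int R2" using nd by (simp flip: of_nat_mult)
lemma id2: "int e2 * int d = 2 * int e1h * int R2" using id e1h_eq by simp
lemma ie1h: "int e1 = 2 * int e1h" using e1h_eq by simp
lemma iR1: "int (r - 1) = 2 * int R1" using R1_eq by simp
lemma iQh: "int Q = 2 * int h" using Q_2h by simp

definition A :: "nat \<Rightarrow> 'a set" where "A m = (\<lambda>a. (th ^ e2) powi (i m) * a) ` cyc (th ^ e1)"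
definition Bc :: "nat \<Rightarrow> 'a set" where "Bc n = (\<lambda>b. (th ^ (e1 div 2)) powi (2 * j n + 1) * b) ` cyc (th ^ e2)"
definition M :: "'a set" where "M = (\<Union>\<mu>\<in>{1..s}. A \<mu>)"
definition N :: "'a set" where "N = (\<Union>\<nu>\<in>{1..t}. Bc \<nu>)"

lemma aE: "(th ^ e2) powi (i m) = E (int e2 * i m)" unfolding E_def by (simp add: power_int_power)
lemma cE: "(th ^ (e1 div 2)) powi (2 * j n + 1) = E (int e1h * (2 * j n + 1))"
  unfolding E_def e1h_def by (simp add: power_int_power)

lemma memA: "x \<in> A m \<Longrightarrow> \<exists>k. x = E (int e2 * i m + int e1 * k)"
  unfolding A_def cyc_E aE by (auto simp: E_add)
lemma memB: "x \<in> Bc n \<Longrightarrow> \<exists>k. x = E (int e1h * (2 * j n + 1) + int e2 * k)"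
  unfolding Bc_def cyc_E cE by (auto simp: E_add)

lemma powf1_r: "int Q dvd z * int f1 * int (r - 1) \<Longrightarrow> (E z ^ f1) ^ r = E z ^ f1"
proof -
  assume a: "int Q dvd z * int f1 * int (r - 1)"
  have "z * int f1 * int r - z * int f1 = z * int f1 * int (r - 1)" using r_ge3 by (simp add: algebra_simps of_nat_diff)
  hence "E (z * int f1 * int r) = E (z * int f1)" using a E_eq_iff by simp
  thus ?thesis by (simp add: E_pow)
qed

lemma powf2_r1: "int Q dvd z * int f2 * (2 * int R2) \<Longrightarrow> (E z ^ f2) ^ (r + 1) = 1"
proof -
  assume a: "int Q dvd z * int f2 * (2 * int R2)"
  have i: "int (r + 1) = 2 * int R2" using R2_eq by simp
  have "(E z ^ f2) ^ (r + 1) = E (z * int f2 * int (r + 1))" by (simp only: E_pow)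
  hence "(E z ^ f2) ^ (r + 1) = E (z * int f2 * (2 * int R2))" unfolding i .
  thus ?thesis using a E_one_iff by simp
qed

lemma elemM: assumes "x \<in> M"
  shows "x \<noteq> 0 \<and> x ^ h = 1 \<and> (x ^ f1) ^ r = x ^ f1 \<and> (x ^ f2) ^ (r + 1) = 1 \<and> (x ^ f2) ^ R2 = 1"
proof -
  obtain m k where x: "x = E (int e2 * i m + int e1 * k)" using assms memA unfolding M_def by blast
  define z where "z = int e2 * i m + int e1 * k"
  have "even z" unfolding z_def using four_dvd_e1 four_dvd_e2 by (auto elim!: dvdE)
  hence a: "x ^ h = 1" unfolding x z_def[symmetric] by (rule E_even_pow)
  have "z * int f1 * int (r - 1) = int Q * (i m * int c0 + k * int (r - 1))"
    unfolding z_def by (rule alg_Mb[OF iQ1 ic0])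
  hence b: "(x ^ f1) ^ r = x ^ f1" unfolding x z_def[symmetric] by (intro powf1_r) simp
  have "z * int f2 * (2 * int R2) = int Q * (i m * 2 * int R2 + 2 * k * int d)"
    unfolding z_def by (rule alg_Mc[OF iQ2 id])
  hence c: "(x ^ f2) ^ (r + 1) = 1" unfolding x z_def[symmetric] by (intro powf2_r1) simp
  have "z * int f2 * int R2 = int Q * (i m * int R2 + k * int d)"
    unfolding z_def by (rule alg_Md[OF iQ2 id])
  hence "(x ^ f2) ^ R2 = E (int Q * (i m * int R2 + k * int d))" unfolding x z_def[symmetric] by (simp add: E_pow)
  hence e: "(x ^ f2) ^ R2 = 1" using E_Q by simp
  show ?thesis using a b c e x by simp
qed

lemma elemN: assumes "x \<in> N"
  shows "x \<noteq> 0 \<and> x ^ h = 1 \<and> (x ^ f1) ^ r = x ^ f1 \<and> (x ^ f2) ^ (r + 1) = 1 \<and> (x ^ f2) ^ R2 = (-1) ^ d"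
proof -
  obtain m k where x: "x = E (int e1h * (2 * j m + 1) + int e2 * k)" using assms memB unfolding N_def by blast
  define z where "z = int e1h * (2 * j m + 1) + int e2 * k"
  have "even z" unfolding z_def using e1h_even four_dvd_e2 by (auto elim!: dvdE)
  hence a: "x ^ h = 1" unfolding x z_def[symmetric] by (rule E_even_pow)
  have "z * int f1 * int (r - 1) = int Q * ((2 * j m + 1) * int R1 + k * int c0)"
    unfolding z_def by (rule alg_Nb[OF iQ1 ie1h iR1 ic0])
  hence b: "(x ^ f1) ^ r = x ^ f1" unfolding x z_def[symmetric] by (intro powf1_r) simp
  have "z * int f2 * (2 * int R2) = int Q * ((2 * j m + 1) * int d + 2 * k * int R2)"
    unfolding z_def by (rule alg_Nc[OF iQ2 id2])
  hence c: "(x ^ f2) ^ (r + 1) = 1" unfolding x z_def[symmetric] by (intro powf2_r1) simp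
  have "z * int f2 * int R2 = int h * ((2 * j m + 1) * int d) + int Q * (k * int R2)"
    unfolding z_def by (rule alg_Nd[OF iQh iQ2 id2])
  hence "(x ^ f2) ^ R2 = E (int h * ((2 * j m + 1) * int d)) * E (int Q * (k * int R2))"
    unfolding x z_def[symmetric] by (simp add: E_pow E_add)
  also have "\<dots> = (-1) ^ d" using E_Q E_hm by simp
  finally show ?thesis using a b c x by simp
qed


lemma disjA:
  assumes "m \<in> {1..s}" "m' \<in> {1..s}" "m \<noteq> m'"
  shows "A m \<inter> A m' = {}"
proof (rule ccontr)
  assume "A m \<inter> A m' \<noteq> {}"
  then obtain x where "x \<in> A m" "x \<in> A m'" by auto
  then obtain k k' where "x = E (int e2 * i m + int e1 * k)" "x = E (int e2 * i m' + int e1 * k')"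
    using memA by metis
  hence "int Q dvd (int e2 * i m + int e1 * k) - (int e2 * i m' + int e1 * k')" by (metis E_eq_iff)
  hence "int e1 dvd (int e2 * i m + int e1 * k) - (int e2 * i m' + int e1 * k')"
    using iQ1 dvd_trans[of "int e1" "int Q"] by simp
  hence "int e1 dvd (int e2 * i m + int e1 * k) - (int e2 * i m' + int e1 * k') + int e1 * (k' - k)"
    by (simp add: dvd_add)
  hence "int e1 dvd int e2 * (i m - i m')" by (simp add: algebra_simps)
  hence "int (e1 div gcd e1 e2) dvd i m - i m'" using gdiv pos by blast
  hence "[i m = i m'] (mod int (e1 div gcd e1 e2))" by (simp add: cong_iff_dvd_diff)
  thus False using i_dist assms by blast
qed

lemma disjB:
  assumes "n \<in> {1..t}" "n' \<in> {1..t}" "n \<noteq> n'"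
  shows "Bc n \<inter> Bc n' = {}"
proof (rule ccontr)
  assume "Bc n \<inter> Bc n' \<noteq> {}"
  then obtain x where "x \<in> Bc n" "x \<in> Bc n'" by auto
  then obtain k k' where "x = E (int e1h * (2 * j n + 1) + int e2 * k)" "x = E (int e1h * (2 * j n' + 1) + int e2 * k')"
    using memB by metis
  hence "int Q dvd (int e1h * (2 * j n + 1) + int e2 * k) - (int e1h * (2 * j n' + 1) + int e2 * k')" by (metis E_eq_iff)
  hence "int e2 dvd (int e1h * (2 * j n + 1) + int e2 * k) - (int e1h * (2 * j n' + 1) + int e2 * k')"
    using iQ2 dvd_trans[of "int e2" "int Q"] by simp
  hence "int e2 dvd (int e1h * (2 * j n + 1) + int e2 * k) - (int e1h * (2 * j n' + 1) + int e2 * k') + int e2 * (k' - k)"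
    by (simp add: dvd_add)
  hence "int e2 dvd int e1 * (j n - j n')" using ie1h by (simp add: algebra_simps)
  hence "int (e2 div gcd e2 e1) dvd j n - j n'" using gdiv pos by blast
  hence "[j n = j n'] (mod int (e2 div gcd e1 e2))" by (simp add: cong_iff_dvd_diff gcd.commute)
  thus False using j_dist assms by blast
qed

lemma disjAB: "A m \<inter> Bc n = {}"
proof (rule ccontr)
  assume "A m \<inter> Bc n \<noteq> {}"
  then obtain x where "x \<in> A m" "x \<in> Bc n" by auto
  then obtain k k' where "x = E (int e2 * i m + int e1 * k)" "x = E (int e1h * (2 * j n + 1) + int e2 * k')"
    using memA memB by metis
  hence d1: "int Q dvd (int e2 * i m + int e1 * k) - (int e1h * (2 * j n + 1) + int e2 * k')" by (metis E_eq_iff)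
  have p1: "int (2 ^ l) dvd int e1" using pow_l_dvd_e1 by (simp only: int_dvd_int_iff)
  have p2: "int (2 ^ l) dvd int e2" using e2_div by (simp only: int_dvd_int_iff)
  have "int (2 ^ l) dvd int Q" using p1 iQ1 by simp
  hence g1: "int (2 ^ l) dvd (int e2 * i m + int e1 * k) - (int e1h * (2 * j n + 1) + int e2 * k')"
    using d1 dvd_trans by blast
  have g2: "int (2 ^ l) dvd int e2 * (i m - k') + int e1 * k" using p1 p2 by simp
  have "int (2 ^ l) dvd (int e2 * (i m - k') + int e1 * k) - ((int e2 * i m + int e1 * k) - (int e1h * (2 * j n + 1) + int e2 * k'))"
    using dvd_diff[OF g2 g1] .
  hence "int (2 ^ l) dvd int e1h * (2 * j n + 1)" by (simp add: algebra_simps)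
  moreover have "coprime (int (2 ^ l)) (2 * j n + 1)" using l_ge by simp
  ultimately have "int (2 ^ l) dvd int e1h" using coprime_dvd_mult_left_iff by blast
  hence "2 ^ l dvd e1h" by (simp only: int_dvd_int_iff)
  thus False using e1h_not by simp
qed

lemma disjMN: "M \<inter> N = {}" unfolding M_def N_def using disjAB by blast


lemma FM1:
  fixes u v :: 'a
  assumes "u ^ r = u" "v ^ r = v" "u \<noteq> v"
  shows "(u - v) ^ h = 1"
proof -
  have "(u - v) ^ r = u - v" using frob assms by simp
  thus ?thesis using G1 assms(3) by simp
qed

lemma FM2:
  fixes u v :: 'a
  assumes "u ^ (r + 1) = 1" "v ^ (r + 1) = 1" "u \<noteq> v" "v \<noteq> 0" "v ^ h = 1"
  shows "(u - v) ^ h * u ^ R2 = (-1) ^ R2 * v ^ R2"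
proof -
  define w where "w = u / v"
  have w1: "w ^ (r + 1) = 1" unfolding w_def using assms by (simp add: power_divide)
  have w2: "w \<noteq> 1" unfolding w_def using assms by simp
  have g: "(w - 1) ^ h * w ^ R2 = (-1) ^ R2" using G2[OF w1 w2] unfolding R2_def .
  have "u - v = v * (w - 1)" unfolding w_def using assms(4) by (simp add: field_simps)
  hence "(u - v) ^ h = (w - 1) ^ h" using assms(5) by (simp add: power_mult_distrib)
  moreover have "w ^ R2 * v ^ R2 = u ^ R2" unfolding w_def using assms(4) by (simp add: power_divide)
  ultimately have "(u - v) ^ h * u ^ R2 = ((w - 1) ^ h * w ^ R2) * v ^ R2" by (simp add: mult.assoc)
  thus ?thesis using g by simp
qed

lemma ofnat_nz: "f dvd Q \<Longrightarrow> (of_nat f :: 'a) \<noteq> 0"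
proof
  assume f: "f dvd Q" and z: "(of_nat f :: 'a) = 0"
  hence "CHAR('a) dvd f" using of_nat_eq_0_iff_char_dvd by blast
  hence "CHAR('a) dvd Q" using f dvd_trans by blast
  moreover have "CHAR('a) dvd Q + 1" using CHAR_dvd_CARD[where 'a='a] unfolding Q_def using card_ge2 by simp
  ultimately have "CHAR('a) dvd 1" by (metis dvd_add_right_iff)
  thus False using char_prime by simp
qed

lemma own_fac:
  fixes b :: 'a
  assumes "f dvd Q" "b ^ h = 1"
  shows "(b ^ (f - 1) * of_nat f) ^ h = 1"
proof -
  have h1: "(of_nat f :: 'a) ^ h = 1" using G1 ofnat_nz[OF assms(1)] ofnat_r by blast
  have h2: "(b ^ (f - 1)) ^ h = 1" using assms(2) by (simp flip: power_mult add: mult.commute power_mult)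
  have "(b ^ (f - 1) * of_nat f) ^ h = (b ^ (f - 1)) ^ h * (of_nat f) ^ h" by (simp add: power_mult_distrib)
  thus ?thesis by (simp only: h1 h2 mult_1_left)
qed

lemma a_in: "(th ^ e2) powi (i m) \<in> A m"
  unfolding A_def using one_in_cyc by (auto intro: rev_image_eqI[of 1])
lemma c_in: "(th ^ (e1 div 2)) powi (2 * j n + 1) \<in> Bc n"
  unfolding Bc_def using one_in_cyc by (auto intro: rev_image_eqI[of 1])
lemma a_nz: "(th ^ e2) powi (i m) \<noteq> 0" using th_nz by simp
lemma c_nz: "(th ^ (e1 div 2)) powi (2 * j n + 1) \<noteq> 0" using th_nz by simp

lemma facA:
  assumes b: "b \<in> M \<union> N" and m: "m \<in> {1..s}"
  shows "(\<Prod>c\<in>A m - {b}. (b - c)) ^ h = 1"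
proof (cases "b \<in> A m")
  case True
  have eq: "(\<Prod>c\<in>A m - {b}. (b - c)) = b ^ (f1 - 1) * of_nat f1"
    using coset_own[OF _ e1_dvdQ a_nz True[unfolded A_def]] pos f1_eq unfolding A_def by simp
  have "b ^ h = 1" using b elemM elemN by blast
  moreover have "f1 dvd Q" using Qe1 by simp
  ultimately show ?thesis unfolding eq using own_fac by blast
next
  case False
  let ?a = "(th ^ e2) powi (i m)"
  have "(\<Prod>c\<in>A m - {b}. (b - c)) = (\<Prod>c\<in>A m. (b - c))" using False by simp
  also have "\<dots> = b ^ f1 - ?a ^ f1"
    using coset_prod[OF _ e1_dvdQ a_nz] pos f1_eq unfolding A_def by simp
  finally have eq: "(\<Prod>c\<in>A m - {b}. (b - c)) = b ^ f1 - ?a ^ f1" .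
  have "(\<Prod>c\<in>A m - {b}. (b - c)) \<noteq> 0" by (simp add: prod_zero_iff)
  hence "b ^ f1 - ?a ^ f1 \<noteq> 0" unfolding eq .
  hence ne: "b ^ f1 \<noteq> ?a ^ f1" by simp
  have "?a \<in> M" using a_in m unfolding M_def by blast
  hence "(?a ^ f1) ^ r = ?a ^ f1" using elemM by blast
  moreover have "(b ^ f1) ^ r = b ^ f1" using b elemM elemN by blast
  ultimately show ?thesis using FM1 ne eq by simp
qed


lemma facB_gen:
  assumes b: "b \<in> M \<union> N" and n: "n \<in> {1..t}" and nb: "b \<notin> Bc n"
  shows "(\<Prod>c\<in>Bc n - {b}. (b - c)) ^ h * (b ^ f2) ^ R2 = (-1) ^ R2 * (-1) ^ d"
proof -
  let ?c = "(th ^ (e1 div 2)) powi (2 * j n + 1)"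
  have "(\<Prod>c\<in>Bc n - {b}. (b - c)) = (\<Prod>c\<in>Bc n. (b - c))" using nb by simp
  also have "\<dots> = b ^ f2 - ?c ^ f2"
    using coset_prod[OF _ e2_dvdQ c_nz] pos f2_eq unfolding Bc_def by simp
  finally have eq: "(\<Prod>c\<in>Bc n - {b}. (b - c)) = b ^ f2 - ?c ^ f2" .
  have "(\<Prod>c\<in>Bc n - {b}. (b - c)) \<noteq> 0" by (simp add: prod_zero_iff)
  hence "b ^ f2 - ?c ^ f2 \<noteq> 0" unfolding eq .
  hence ne: "b ^ f2 \<noteq> ?c ^ f2" by simp
  have cN: "?c \<in> N" using c_in n unfolding N_def by blast
  have c1: "(?c ^ f2) ^ (r + 1) = 1" and c2: "(?c ^ f2) ^ R2 = (-1) ^ d" and c3: "?c ^ h = 1"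
    using elemN[OF cN] by blast+
  have c4: "(?c ^ f2) ^ h = 1" using c3 by (metis power_mult mult.commute power_one)
  have c5: "?c ^ f2 \<noteq> 0" using th_nz by simp
  have b1: "(b ^ f2) ^ (r + 1) = 1" using b elemM elemN by blast
  show ?thesis using FM2[OF b1 c1 ne c5 c4] c2 eq by simp
qed

lemma facB_M:
  assumes b: "b \<in> M" and n: "n \<in> {1..t}"
  shows "(\<Prod>c\<in>Bc n - {b}. (b - c)) ^ h = (-1) ^ R2 * (-1) ^ d"
proof -
  have nb: "b \<notin> Bc n" using b n disjMN unfolding N_def by blast
  have "(b ^ f2) ^ R2 = 1" using b elemM by blast
  thus ?thesis using facB_gen[OF _ n nb] b by simp
qed

lemma facB_N_other:
  assumes b: "b \<in> N" and n: "n \<in> {1..t}" and nb: "b \<notin> Bc n"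
  shows "(\<Prod>c\<in>Bc n - {b}. (b - c)) ^ h = (-1) ^ R2"
proof -
  have "(b ^ f2) ^ R2 = (-1) ^ d" using b elemN by blast
  hence "(\<Prod>c\<in>Bc n - {b}. (b - c)) ^ h * (-1) ^ d = (-1) ^ R2 * (-1) ^ d"
    using facB_gen[OF _ n nb] b by simp
  moreover have "((-1::'a) ^ d) \<noteq> 0" by simp
  ultimately show ?thesis by (metis mult_right_cancel)
qed

lemma facB_N_own:
  assumes b: "b \<in> Bc n" and n: "n \<in> {1..t}"
  shows "(\<Prod>c\<in>Bc n - {b}. (b - c)) ^ h = 1"
proof -
  have eq: "(\<Prod>c\<in>Bc n - {b}. (b - c)) = b ^ (f2 - 1) * of_nat f2"
    using coset_own[OF _ e2_dvdQ c_nz b[unfolded Bc_def]] pos f2_eq unfolding Bc_def by simp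
  have "b \<in> N" using b n unfolding N_def by blast
  hence "b ^ h = 1" using elemN by blast
  moreover have "f2 dvd Q" using Qe2 by simp
  ultimately show ?thesis unfolding eq using own_fac by blast
qed

lemma prod_split:
  "(\<Prod>c\<in>(M \<union> N) - {b}. F c) =
     (\<Prod>\<mu>\<in>{1..s}. \<Prod>c\<in>A \<mu> - {b}. F c) * (\<Prod>\<nu>\<in>{1..t}. \<Prod>c\<in>Bc \<nu> - {b}. F c)"
proof -
  have e: "(M \<union> N) - {b} = (\<Union>\<mu>\<in>{1..s}. A \<mu> - {b}) \<union> (\<Union>\<nu>\<in>{1..t}. Bc \<nu> - {b})"
    unfolding M_def N_def by blast
  have d: "(\<Union>\<mu>\<in>{1..s}. A \<mu> - {b}) \<inter> (\<Union>\<nu>\<in>{1..t}. Bc \<nu> - {b}) = {}"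
    using disjMN unfolding M_def N_def by blast
  have "(\<Prod>c\<in>(M \<union> N) - {b}. F c) =
     (\<Prod>c\<in>(\<Union>\<mu>\<in>{1..s}. A \<mu> - {b}). F c) * (\<Prod>c\<in>(\<Union>\<nu>\<in>{1..t}. Bc \<nu> - {b}). F c)"
    unfolding e by (rule prod.union_disjoint) (use d in auto)
  also have "(\<Prod>c\<in>(\<Union>\<mu>\<in>{1..s}. A \<mu> - {b}). F c) = (\<Prod>\<mu>\<in>{1..s}. \<Prod>c\<in>A \<mu> - {b}. F c)"
  proof (rule prod.UNION_disjoint)
    show "\<forall>i\<in>{1..s}. \<forall>j\<in>{1..s}. i \<noteq> j \<longrightarrow> (A i - {b}) \<inter> (A j - {b}) = {}"
      using disjA by blast
  qed simp_all
  also have "(\<Prod>c\<in>(\<Union>\<nu>\<in>{1..t}. Bc \<nu> - {b}). F c) = (\<Prod>\<nu>\<in>{1..t}. \<Prod>c\<in>Bc \<nu> - {b}. F c)"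
  proof (rule prod.UNION_disjoint)
    show "\<forall>i\<in>{1..t}. \<forall>j\<in>{1..t}. i \<noteq> j \<longrightarrow> (Bc i - {b}) \<inter> (Bc j - {b}) = {}"
      using disjB by blast
  qed simp_all
  finally show ?thesis .
qed

lemma mainM:
  assumes b: "b \<in> M"
  shows "(L (M \<union> N) b) ^ h = (-1) ^ (t * d + t * R2)"
proof -
  have "(L (M \<union> N) b) ^ h = (\<Prod>\<mu>\<in>{1..s}. (\<Prod>c\<in>A \<mu> - {b}. (b - c)) ^ h) * (\<Prod>\<nu>\<in>{1..t}. (\<Prod>c\<in>Bc \<nu> - {b}. (b - c)) ^ h)"
    unfolding L_def prod_split by (simp add: power_mult_distrib prod_power_distrib)
  also have "(\<Prod>\<mu>\<in>{1..s}. (\<Prod>c\<in>A \<mu> - {b}. (b - c)) ^ h) = 1"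
    using facA b by (intro prod.neutral) auto
  also have "(\<Prod>\<nu>\<in>{1..t}. (\<Prod>c\<in>Bc \<nu> - {b}. (b - c)) ^ h) = (\<Prod>\<nu>\<in>{1..t}. (-1) ^ R2 * (-1) ^ d)"
    using facB_M b by (intro prod.cong) auto
  also have "\<dots> = ((-1) ^ R2 * (-1) ^ d) ^ t" by simp
  also have "\<dots> = ((-1) ^ (R2 + d)) ^ t" by (simp only: power_add)
  also have "\<dots> = (-1) ^ ((R2 + d) * t)" by (simp only: power_mult)
  also have "(R2 + d) * t = t * d + t * R2" by (simp add: algebra_simps)
  finally show ?thesis by simp
qed

lemma mainN:
  assumes b: "b \<in> N"
  shows "(L (M \<union> N) b) ^ h = (-1) ^ ((t - 1) * R2)"
proof -
  obtain n0 where n0: "n0 \<in> {1..t}" "b \<in> Bc n0" using b unfolding N_def by blast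
  have "(L (M \<union> N) b) ^ h = (\<Prod>\<mu>\<in>{1..s}. (\<Prod>c\<in>A \<mu> - {b}. (b - c)) ^ h) * (\<Prod>\<nu>\<in>{1..t}. (\<Prod>c\<in>Bc \<nu> - {b}. (b - c)) ^ h)"
    unfolding L_def prod_split by (simp add: power_mult_distrib prod_power_distrib)
  also have "(\<Prod>\<mu>\<in>{1..s}. (\<Prod>c\<in>A \<mu> - {b}. (b - c)) ^ h) = 1"
    using facA b by (intro prod.neutral) auto
  also have "(\<Prod>\<nu>\<in>{1..t}. (\<Prod>c\<in>Bc \<nu> - {b}. (b - c)) ^ h) =
      (\<Prod>c\<in>Bc n0 - {b}. (b - c)) ^ h * (\<Prod>\<nu>\<in>{1..t} - {n0}. (\<Prod>c\<in>Bc \<nu> - {b}. (b - c)) ^ h)"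
    using n0 by (simp add: prod.remove)
  also have "(\<Prod>c\<in>Bc n0 - {b}. (b - c)) ^ h = 1" using facB_N_own n0 by blast
  also have "(\<Prod>\<nu>\<in>{1..t} - {n0}. (\<Prod>c\<in>Bc \<nu> - {b}. (b - c)) ^ h) = (\<Prod>\<nu>\<in>{1..t} - {n0}. (-1) ^ R2)"
  proof (rule prod.cong)
    fix n assume "n \<in> {1..t} - {n0}"
    hence "n \<in> {1..t}" "b \<notin> Bc n" using disjB n0 by blast+
    thus "(\<Prod>c\<in>Bc n - {b}. (b - c)) ^ h = (-1) ^ R2" using facB_N_other b by blast
  qed simp
  also have "\<dots> = (-1) ^ ((t - 1) * R2)" using n0 by (simp add: power_mult mult.commute)
  finally show ?thesis by simp
qed

lemma h_pos: "h > 0" using Q_2h Q_pos by simp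

lemma eta_final:
  assumes "(x :: 'a) ^ h = (-1) ^ n"
  shows "eta x = (-1) ^ n"
proof -
  have "x \<noteq> 0"
  proof
    assume "x = 0"
    hence "(-1::'a) ^ n = 0" using assms h_pos by (simp add: power_0_left)
    thus False by simp
  qed
  thus ?thesis using eta_from_pow assms by blast
qed


lemma final:
  "(\<forall>b\<in>(\<Union>\<mu>\<in>{1..s}. (\<lambda>a. (th ^ e2) powi (i \<mu>) * a) ` cyc (th ^ e1)).
      eta (L ((\<Union>\<mu>\<in>{1..s}. (\<lambda>a. (th ^ e2) powi (i \<mu>) * a) ` cyc (th ^ e1)) \<union>
              (\<Union>\<nu>\<in>{1..t}. (\<lambda>b. (th ^ (e1 div 2)) powi (2 * j \<nu> + 1) * b) ` cyc (th ^ e2))) b) =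
            (-1) ^ (t * (e1 * (r + 1) div (2 * e2)) + t * ((r + 1) div 2)))
   \<and> (\<forall>b\<in>(\<Union>\<nu>\<in>{1..t}. (\<lambda>b. (th ^ (e1 div 2)) powi (2 * j \<nu> + 1) * b) ` cyc (th ^ e2)).
      eta (L ((\<Union>\<mu>\<in>{1..s}. (\<lambda>a. (th ^ e2) powi (i \<mu>) * a) ` cyc (th ^ e1)) \<union>
              (\<Union>\<nu>\<in>{1..t}. (\<lambda>b. (th ^ (e1 div 2)) powi (2 * j \<nu> + 1) * b) ` cyc (th ^ e2))) b) =
            (-1) ^ ((t - 1) * ((r + 1) div 2)))"
proof -
  have eM: "(\<Union>\<mu>\<in>{1..s}. (\<lambda>a. (th ^ e2) powi (i \<mu>) * a) ` cyc (th ^ e1)) = M"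
    unfolding M_def A_def ..
  have eN: "(\<Union>\<nu>\<in>{1..t}. (\<lambda>b. (th ^ (e1 div 2)) powi (2 * j \<nu> + 1) * b) ` cyc (th ^ e2)) = N"
    unfolding N_def Bc_def ..
  show ?thesis unfolding eM eN
    using mainM mainN eta_final unfolding d_def R2_def by blast
qed

end
theorem mainTheorem7:
  fixes \<theta> :: "'a::{finite,field}"
    and r e1 f1 e2 f2 l s t :: nat
    and i j :: "nat \<Rightarrow> int"
  assumes r_pp: "\<exists>p k. prime p \<and> 0 < k \<and> r = p ^ k"
    and r_odd: "odd r"
    and q_def: "card (UNIV :: 'a set) = r ^ 2"
    and prim: "primitive_elem \<theta>"
    and pos: "0 < e1" "0 < f1" "0 < e2" "0 < f2"
    and fact1: "card (UNIV :: 'a set) - 1 = e1 * f1"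
    and fact2: "card (UNIV :: 'a set) - 1 = e2 * f2"
    and l_ge: "2 \<le> l"
    and e1_cong: "[e1 = 2 ^ l] (mod 2 ^ (l + 1))"
    and e2_div: "2 ^ l dvd e2"
    and div1: "2 * e2 dvd e1 * (r + 1)"
    and div2: "e1 dvd e2 * (r - 1)"
    and s_bd: "1 \<le> s" "s \<le> e1 div gcd e1 e2"
    and t_bd: "1 \<le> t" "t \<le> e2 div gcd e1 e2"
    and i_dist: "\<forall>\<mu>\<in>{1..s}. \<forall>\<mu>'\<in>{1..s}. \<mu> \<noteq> \<mu>' \<longrightarrow>
                   \<not> [i \<mu> = i \<mu>'] (mod int (e1 div gcd e1 e2))"
    and j_dist: "\<forall>\<nu>\<in>{1..t}. \<forall>\<nu>'\<in>{1..t}. \<nu> \<noteq> \<nu>' \<longrightarrow>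
                   \<not> [j \<nu> = j \<nu>'] (mod int (e2 div gcd e1 e2))"
  defines "M \<equiv> (\<Union>\<mu>\<in>{1..s}. (\<lambda>a. (\<theta> ^ e2) powi (i \<mu>) * a) ` cyc (\<theta> ^ e1))"
    and "N \<equiv> (\<Union>\<nu>\<in>{1..t}. (\<lambda>b. (\<theta> ^ (e1 div 2)) powi (2 * j \<nu> + 1) * b) ` cyc (\<theta> ^ e2))"
  shows "(\<forall>b\<in>M. eta (L (M \<union> N) b) =
            (-1) ^ (t * (e1 * (r + 1) div (2 * e2)) + t * ((r + 1) div 2)))
       \<and> (\<forall>b\<in>N. eta (L (M \<union> N) b) = (-1) ^ ((t - 1) * ((r + 1) div 2)))"
proof -
  have inst: "mc \<theta> r e1 f1 e2 f2 l s t i j"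
    by unfold_locales (use assms in auto)
  show ?thesis unfolding M_def N_def by (rule mc.final[OF inst])
qed
end
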